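(* For all $n\ge 0$, $|F_n(321,1423,2143)|=\binom{n}{2}+1$.
   Context: A permutation $\pi$ avoids a classical pattern $p\in S_k$ if no subsequence of $\pi$ of length $k$ is order-isomorphic to $p$. A Fishburn permutation is a permutation $\pi=\pi_1\cdots\pi_n$ of $[n]$ for which there are no indices $i<j$ with $\pi_j<\pi_i<\pi_{i+1}$ and $\pi_i=\pi_j+1$. $F_n(\sigma_1,\dots,\sigma_k)$ denotes the set of Fishburn permutations of length $n$ avoiding each of the classical patterns $\sigma_1,\dots,\sigma_k$ (with $F_0$ containing only the empty permutation). *)

theory Defs
  imports "HOL-Combinatorics.Multiset_Permutations"
begin

text \<open>Permutations are lists; s ! i is the (i+1)-th entry (0-based indices).\<close>

definition contains_pattern :: "nat list \<Rightarrow> nat list \<Rightarrow> bool" where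
  "contains_pattern s p \<longleftrightarrow>
     (\<exists>is :: nat list. length is = length p \<and> sorted_wrt (<) is \<and>
        (\<forall>a \<in> set is. a < length s) \<and>
        (\<forall>a < length p. \<forall>b < length p.
            (s ! (is ! a) < s ! (is ! b) \<longleftrightarrow> p ! a < p ! b)))"

definition avoids :: "nat list \<Rightarrow> nat list \<Rightarrow> bool" where
  "avoids s p \<longleftrightarrow> \<not> contains_pattern s p"

definition fishburn :: "nat list \<Rightarrow> bool" where
  "fishburn s \<longleftrightarrow>
     \<not> (\<exists>i j. i < j \<and> j < length s \<and> Suc i < length s \<and>
            s ! j < s ! i \<and> s ! i < s ! Suc i \<and> s ! i = s ! j + 1)"

definition F_set :: "nat \<Rightarrow> nat list list \<Rightarrow> nat list set" where
  "F_set n pats = {s \<in> permutations_of_set {1..n}. fishburn s \<and> (\<forall>p \<in> set pats. avoids s p)}"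

end

theory Submission
  imports Defs
begin


lemma all_less3: "(\<forall>a<length [x,y,z]. P a) = (P 0 \<and> P 1 \<and> P 2)"
  by (auto simp: less_Suc_eq numeral_2_eq_2 numeral_3_eq_3)
lemma all_less4: "(\<forall>a<length [x,y,z,w]. P a) = (P 0 \<and> P 1 \<and> P 2 \<and> P 3)"
  by (auto simp: less_Suc_eq numeral_2_eq_2 numeral_3_eq_3)

lemma av321: assumes "avoids s [3,2,1]" "i<j" "j<k" "k<length s"
  shows "\<not> (s!j < s!i \<and> s!k < s!j)"
proof
  assume h: "s!j < s!i \<and> s!k < s!j"
  have "contains_pattern s [3,2,1]"
    unfolding contains_pattern_def
    apply (rule exI[of _ "[i,j,k]"])
    apply (simp only: all_less3)
    using assms h by (simp add: less_imp_not_less)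
  thus False using assms(1) by (simp add: avoids_def)
qed

lemma av1423: assumes "avoids s [1,4,2,3]" "i<j" "j<k" "k<l" "l<length s"
  shows "\<not> (s!i < s!k \<and> s!k < s!l \<and> s!l < s!j)"
proof
  assume h: "s!i < s!k \<and> s!k < s!l \<and> s!l < s!j"
  have "contains_pattern s [1,4,2,3]"
    unfolding contains_pattern_def
    apply (rule exI[of _ "[i,j,k,l]"])
    apply (simp only: all_less4)
    using assms h by (simp add: less_imp_not_less)
  thus False using assms(1) by (simp add: avoids_def)
qed

lemma av2143: assumes "avoids s [2,1,4,3]" "i<j" "j<k" "k<l" "l<length s"
  shows "\<not> (s!j < s!i \<and> s!i < s!l \<and> s!l < s!k)"
proof
  assume h: "s!j < s!i \<and> s!i < s!l \<and> s!l < s!k"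
  have "contains_pattern s [2,1,4,3]"
    unfolding contains_pattern_def
    apply (rule exI[of _ "[i,j,k,l]"])
    apply (simp only: all_less4)
    using assms h by (simp add: less_imp_not_less)
  thus False using assms(1) by (simp add: avoids_def)
qed

lemma fishD: assumes "fishburn s" "i<j" "j<length s" "Suc i < length s" "s!i < s!Suc i"
  shows "s!i \<noteq> s!j + 1"
proof
  assume e: "s!i = s!j + 1"
  have "\<exists>i j. i < j \<and> j < length s \<and> Suc i < length s \<and>
            s ! j < s ! i \<and> s ! i < s ! Suc i \<and> s ! i = s ! j + 1"
    using assms e by (intro exI[of _ i] exI[of _ j]) simp
  thus False using assms(1) unfolding fishburn_def by blast
qed

lemma contains3: assumes "contains_pattern s [a1,a2,a3]"
  shows "\<exists>x y z. x<y \<and> y<z \<and> z<length s \<and> (s!x<s!y \<longleftrightarrow> a1<a2) \<and> (s!y<s!x \<longleftrightarrow> a2<a1)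
    \<and> (s!x<s!z \<longleftrightarrow> a1<a3) \<and> (s!z<s!x \<longleftrightarrow> a3<a1) \<and> (s!y<s!z \<longleftrightarrow> a2<a3) \<and> (s!z<s!y \<longleftrightarrow> a3<a2)"
proof -
  obtain "is" where h: "length is = length [a1,a2,a3]" "sorted_wrt (<) is" "\<forall>a\<in>set is. a < length s"
    "\<forall>a<length [a1,a2,a3]. \<forall>b<length [a1,a2,a3]. (s ! (is ! a) < s ! (is ! b) \<longleftrightarrow> [a1,a2,a3] ! a < [a1,a2,a3] ! b)"
    using assms unfolding contains_pattern_def by (elim exE conjE) (rule that)
  have "length is = Suc (Suc (Suc 0))" using h(1) by simp
  then obtain x y z where "is = [x,y,z]" by (auto simp: length_Suc_conv)
  have A: "x<y \<and> y<z \<and> z<length s" using h(2,3) \<open>is = _\<close> by simp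
  have B: "\<forall>a<length [a1,a2,a3]. \<forall>b<length [a1,a2,a3]. (s ! ([x,y,z] ! a) < s ! ([x,y,z] ! b) \<longleftrightarrow> [a1,a2,a3] ! a < [a1,a2,a3] ! b)"
    using h(4) by (simp only: \<open>is = _\<close>)
  hence B': "(s!x<s!y \<longleftrightarrow> a1<a2) \<and> (s!y<s!x \<longleftrightarrow> a2<a1)
    \<and> (s!x<s!z \<longleftrightarrow> a1<a3) \<and> (s!z<s!x \<longleftrightarrow> a3<a1) \<and> (s!y<s!z \<longleftrightarrow> a2<a3) \<and> (s!z<s!y \<longleftrightarrow> a3<a2)"
    unfolding all_less3 by (simp only: nth_Cons_0 nth_Cons_Suc One_nat_def numeral_2_eq_2)
  show ?thesis using A B' by blast
qed

lemma contains4: assumes "contains_pattern s [a1,a2,a3,a4]"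
  shows "\<exists>x y z w. x<y \<and> y<z \<and> z<w \<and> w<length s \<and> (s!x<s!y \<longleftrightarrow> a1<a2) \<and> (s!y<s!x \<longleftrightarrow> a2<a1)
    \<and> (s!x<s!z \<longleftrightarrow> a1<a3) \<and> (s!z<s!x \<longleftrightarrow> a3<a1) \<and> (s!y<s!z \<longleftrightarrow> a2<a3) \<and> (s!z<s!y \<longleftrightarrow> a3<a2)
    \<and> (s!x<s!w \<longleftrightarrow> a1<a4) \<and> (s!w<s!x \<longleftrightarrow> a4<a1) \<and> (s!y<s!w \<longleftrightarrow> a2<a4) \<and> (s!w<s!y \<longleftrightarrow> a4<a2)
    \<and> (s!z<s!w \<longleftrightarrow> a3<a4) \<and> (s!w<s!z \<longleftrightarrow> a4<a3)"
proof -
  obtain "is" where h: "length is = length [a1,a2,a3,a4]" "sorted_wrt (<) is" "\<forall>a\<in>set is. a < length s"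
    "\<forall>a<length [a1,a2,a3,a4]. \<forall>b<length [a1,a2,a3,a4]. (s ! (is ! a) < s ! (is ! b) \<longleftrightarrow> [a1,a2,a3,a4] ! a < [a1,a2,a3,a4] ! b)"
    using assms unfolding contains_pattern_def by (elim exE conjE) (rule that)
  have "length is = Suc (Suc (Suc (Suc 0)))" using h(1) by simp
  then obtain x y z w where "is = [x,y,z,w]" by (auto simp: length_Suc_conv)
  have A: "x<y \<and> y<z \<and> z<w \<and> w<length s" using h(2,3) \<open>is = _\<close> by simp
  have B: "\<forall>a<length [a1,a2,a3,a4]. \<forall>b<length [a1,a2,a3,a4]. (s ! ([x,y,z,w] ! a) < s ! ([x,y,z,w] ! b) \<longleftrightarrow> [a1,a2,a3,a4] ! a < [a1,a2,a3,a4] ! b)"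
    using h(4) by (simp only: \<open>is = _\<close>)
  hence B': "(s!x<s!y \<longleftrightarrow> a1<a2) \<and> (s!y<s!x \<longleftrightarrow> a2<a1)
    \<and> (s!x<s!z \<longleftrightarrow> a1<a3) \<and> (s!z<s!x \<longleftrightarrow> a3<a1) \<and> (s!y<s!z \<longleftrightarrow> a2<a3) \<and> (s!z<s!y \<longleftrightarrow> a3<a2)
    \<and> (s!x<s!w \<longleftrightarrow> a1<a4) \<and> (s!w<s!x \<longleftrightarrow> a4<a1) \<and> (s!y<s!w \<longleftrightarrow> a2<a4) \<and> (s!w<s!y \<longleftrightarrow> a4<a2)
    \<and> (s!z<s!w \<longleftrightarrow> a3<a4) \<and> (s!w<s!z \<longleftrightarrow> a4<a3)"
    unfolding all_less4 by (simp only: nth_Cons_0 nth_Cons_Suc One_nat_def numeral_2_eq_2 numeral_3_eq_3)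
  show ?thesis using A B' by blast
qed



definition gv :: "nat \<Rightarrow> nat \<Rightarrow> nat \<Rightarrow> nat" where
  "gv m b i = (if b = 1 then (if Suc i = m then Suc m else if i = m then m else Suc i)
     else (if i = 0 then Suc b else if i < b then i else if i < m then i + 2 else b))"

definition gen :: "nat \<Rightarrow> nat \<Rightarrow> nat list" where
  "gen m b = map (gv m b) [0..<Suc m]"

lemma gen_nth: "i < Suc m \<Longrightarrow> gen m b ! i = gv m b i"
  unfolding gen_def by (simp del: upt_Suc)

lemma gen_len[simp]: "length (gen m b) = Suc m"
  unfolding gen_def by (simp del: upt_Suc)

lemma gv_inj: "1 \<le> b \<Longrightarrow> b \<le> m \<Longrightarrow> inj_on (gv m b) {0..<Suc m}"
  unfolding inj_on_def gv_def by (auto split: if_splits)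

lemma gv_img: "1 \<le> b \<Longrightarrow> b \<le> m \<Longrightarrow> gv m b ` {0..<Suc m} \<subseteq> {1..Suc m}"
  unfolding gv_def by (auto split: if_splits)

lemma gen_perm: assumes "1 \<le> b" "b \<le> m" shows "gen m b \<in> permutations_of_set {1..Suc m}"
proof -
  have "gv m b ` {0..<Suc m} = {1..Suc m}"
    apply (rule card_seteq) using gv_img[OF assms] card_image[OF gv_inj[OF assms]] by auto
  thus ?thesis unfolding permutations_of_set_def gen_def
    using gv_inj[OF assms] by (simp add: distinct_map del: upt_Suc)
qed

lemma gen_fish: assumes "1 \<le> b" "b \<le> m" shows "fishburn (gen m b)"
  unfolding fishburn_def using assms by (auto simp: gen_nth gv_def split: if_splits)

lemma gen_321: assumes "1 \<le> b" "b \<le> m" shows "avoids (gen m b) [3,2,1]"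
  unfolding avoids_def
proof
  assume "contains_pattern (gen m b) [3,2,1]"
  from contains3[OF this] obtain x y z where "x<y" "y<z" "z<Suc m"
    "gv m b y < gv m b x" "gv m b z < gv m b y" by (auto simp: gen_nth)
  thus False using assms by (auto simp: gv_def split: if_splits)
qed

lemma gen_1423: assumes "1 \<le> b" "b \<le> m" shows "avoids (gen m b) [1,4,2,3]"
  unfolding avoids_def
proof
  assume "contains_pattern (gen m b) [1,4,2,3]"
  from contains4[OF this] obtain x y z w where "x<y" "y<z" "z<w" "w<Suc m"
    "gv m b x < gv m b z" "gv m b z < gv m b w" "gv m b w < gv m b y" by (auto simp: gen_nth)
  thus False using assms by (auto simp: gv_def split: if_splits)
qed

lemma gen_2143: assumes "1 \<le> b" "b \<le> m" shows "avoids (gen m b) [2,1,4,3]"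
  unfolding avoids_def
proof
  assume "contains_pattern (gen m b) [2,1,4,3]"
  from contains4[OF this] obtain x y z w where "x<y" "y<z" "z<w" "w<Suc m"
    "gv m b y < gv m b x" "gv m b x < gv m b w" "gv m b w < gv m b z" by (auto simp: gen_nth)
  thus False using assms by (auto simp: gv_def split: if_splits)
qed



lemma contains_prefix: "contains_pattern xs p \<Longrightarrow> contains_pattern (xs@ys) p"
  unfolding contains_pattern_def
  apply (elim exE conjE)
  subgoal for "is"
    apply (rule exI[of _ "is"])
    apply (auto simp: nth_append)
    done
  done

lemma fish_prefix: "fishburn (xs@ys) \<Longrightarrow> fishburn xs"
  unfolding fishburn_def
  apply (elim contrapos_nn exE conjE)
  subgoal for i j
    apply (rule exI[of _ i], rule exI[of _ j]) by (auto simp: nth_append)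
  done

lemma contains_snoc:
  assumes c: "contains_pattern (xs@[M]) p" and lt: "\<forall>v\<in>set xs. v < M"
    and a: "a < length p" "p!(length p - 1) < p!a"
  shows "contains_pattern xs p"
proof -
  obtain "is" where h: "length is = length p" "sorted_wrt (<) is" "\<forall>a\<in>set is. a < length (xs@[M])"
    "\<forall>a<length p. \<forall>b<length p. ((xs@[M]) ! (is ! a) < (xs@[M]) ! (is ! b) \<longleftrightarrow> p ! a < p ! b)"
    using c unfolding contains_pattern_def by (elim exE conjE) (rule that)
  define L where "L = length p - 1"
  have aL: "a < L" using a unfolding L_def
    by (metis Suc_pred' diff_Suc_1 gr_zeroI less_Suc_eq less_irrefl_nat not_less_zero)
  have Lp: "L < length p" using a unfolding L_def by auto
  have srt: "\<And>i j. i < j \<Longrightarrow> j < length is \<Longrightarrow> is!i < is!j"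
    using h(2) by (simp add: sorted_wrt_iff_nth_less)
  have bnd: "\<And>i. i < length is \<Longrightarrow> is!i < Suc (length xs)"
    using h(3) nth_mem by fastforce
  show ?thesis
  proof (cases "is!L < length xs")
    case True
    have all: "\<And>k. k < length p \<Longrightarrow> is!k < length xs"
    proof -
      fix k assume k: "k < length p"
      hence "k \<le> L" unfolding L_def by auto
      thus "is!k < length xs" using True srt[of k L] h(1) Lp by (cases "k = L") auto
    qed
    show ?thesis unfolding contains_pattern_def
      apply (rule exI[of _ "is"])
      using h all by (auto simp: nth_append in_set_conv_nth)
  next
    case False
    hence eq: "is!L = length xs" using bnd[of L] h(1) Lp by auto
    have ia: "is!a < length xs" using srt[of a L] aL Lp h(1) eq by auto
    have "(xs@[M]) ! (is ! L) < (xs@[M]) ! (is ! a)" using h(4) Lp a aL unfolding L_def by auto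
    hence "M < xs ! (is!a)" using eq ia by (simp add: nth_append)
    moreover have "xs ! (is!a) < M" using lt ia by auto
    ultimately show ?thesis by simp
  qed
qed

lemma fish_snoc: assumes "fishburn xs" "\<forall>v\<in>set xs. v < M" shows "fishburn (xs@[M])"
  unfolding fishburn_def
proof
  assume "\<exists>i j. i < j \<and> j < length (xs @ [M]) \<and> Suc i < length (xs @ [M]) \<and>
     (xs @ [M]) ! j < (xs @ [M]) ! i \<and> (xs @ [M]) ! i < (xs @ [M]) ! Suc i \<and> (xs @ [M]) ! i = (xs @ [M]) ! j + 1"
  then obtain i j where h: "i < j" "j < Suc (length xs)" "Suc i < Suc (length xs)"
     "(xs @ [M]) ! j < (xs @ [M]) ! i" "(xs @ [M]) ! i < (xs @ [M]) ! Suc i" "(xs @ [M]) ! i = (xs @ [M]) ! j + 1"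
    by auto
  have ilt: "i < length xs" using h by auto
  have "j \<noteq> length xs"
  proof
    assume "j = length xs"
    hence "M < xs ! i" using h(4) ilt by (simp add: nth_append)
    thus False using assms(2) ilt nth_mem[OF ilt] by fastforce
  qed
  hence jlt: "j < length xs" using h by auto
  hence silt: "Suc i < length xs" using h by auto
  have "\<exists>i j. i < j \<and> j < length xs \<and> Suc i < length xs \<and>
            xs ! j < xs ! i \<and> xs ! i < xs ! Suc i \<and> xs ! i = xs ! j + 1"
    apply (rule exI[of _ i], rule exI[of _ j]) using h jlt silt by (simp add: nth_append)
  thus False using assms(1) unfolding fishburn_def by blast
qed



declare upt_Suc[simp del]

lemma sorted_seg:
  fixes f :: "nat \<Rightarrow> nat"
  assumes "\<And>i j. i<j \<Longrightarrow> j<k \<Longrightarrow> f i < f j" "f ` {0..<k} = set ys" "sorted_wrt (<) ys"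
  shows "\<And>i. i < k \<Longrightarrow> f i = ys ! i"
proof -
  have "sorted_wrt (<) (map f [0..<k])"
    unfolding sorted_wrt_iff_nth_less using assms(1) by (simp del: upt_Suc)
  hence "map f [0..<k] = ys"
    using assms(2,3) by (intro sorted_distinct_set_unique) (auto simp: strict_sorted_iff simp del: upt_Suc)
  thus "\<And>i. i < k \<Longrightarrow> f i = ys ! i" by (metis add_0 diff_zero nth_map_upt)
qed

lemma classify:
  assumes sF: "s \<in> F_set (Suc m) [[3,2,1], [1,4,2,3], [2,1,4,3]]" and ln: "last s \<noteq> Suc m"
  shows "\<exists>b\<in>{1..m}. s = gen m b"
proof -
  have st: "set s = {1..Suc m}" and ds: "distinct s" and fs: "fishburn s"
    and a1: "avoids s [3,2,1]" and a2: "avoids s [1,4,2,3]" and a3: "avoids s [2,1,4,3]"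
    using sF unfolding F_set_def permutations_of_set_def by auto
  have len: "length s = Suc m" using distinct_card[OF ds] st by simp
  have hv: "\<And>i. i < Suc m \<Longrightarrow> s!i \<in> {1..Suc m}" using st len nth_mem by fastforce
  have inj: "\<And>i j. i < Suc m \<Longrightarrow> j < Suc m \<Longrightarrow> s!i = s!j \<Longrightarrow> i = j"
    using ds len nth_eq_iff_index_eq by metis
  have sj: "\<And>v. v \<in> {1..Suc m} \<Longrightarrow> \<exists>i<Suc m. s!i = v"
    using st len by (metis in_set_conv_nth)
  obtain p where p: "p < Suc m" "s!p = Suc m" using sj[of "Suc m"] by auto
  have lastm: "last s = s!m" using len last_conv_nth[of s] by (cases s) auto
  have pm: "p < m" using p ln lastm by (cases "p = m") auto
  have neqN: "\<And>i. i < Suc m \<Longrightarrow> i \<noteq> p \<Longrightarrow> s!i < Suc m"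
    using hv inj p by (metis atLeastAtMost_iff le_neq_implies_less)
  have after: "\<And>q r. p < q \<Longrightarrow> q < r \<Longrightarrow> r < Suc m \<Longrightarrow> s!q < s!r"
  proof -
    fix q r assume qr: "p < q" "q < r" "r < Suc m"
    have "s!q < s!p" using neqN[of q] qr p by auto
    hence "\<not> s!r < s!q" using av321[OF a1, of p q r] qr len by auto
    moreover have "s!r \<noteq> s!q" using inj[of q r] qr by auto
    ultimately show "s!q < s!r" by auto
  qed
  show ?thesis
  proof (cases "p = 0")
    case True
    have mono: "\<And>i j. i<j \<Longrightarrow> j<m \<Longrightarrow> s!Suc i < s!Suc j" using after True by auto
    have img: "(\<lambda>i. s!Suc i) ` {0..<m} = set [1..<Suc m]"
    proof
      show "(\<lambda>i. s!Suc i) ` {0..<m} \<subseteq> set [1..<Suc m]"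
        using neqN hv True by fastforce
      show "set [1..<Suc m] \<subseteq> (\<lambda>i. s!Suc i) ` {0..<m}"
      proof
        fix v assume v: "v \<in> set [1..<Suc m]"
        then obtain i where i: "i < Suc m" "s!i = v" using sj[of v] by auto
        have "i \<noteq> 0"
        proof
          assume "i = 0" with i True p have "v = Suc m" by simp
          with v show False by simp
        qed
        then obtain k where "i = Suc k" by (cases i) auto
        thus "v \<in> (\<lambda>i. s!Suc i) ` {0..<m}" using i by auto
      qed
    qed
    have vals: "\<And>i. i < m \<Longrightarrow> s!Suc i = [1..<Suc m] ! i"
      using sorted_seg[of m "\<lambda>i. s!Suc i", OF mono img sorted_wrt_upt] by blast
    have "s = gen m m"
    proof (rule nth_equalityI)
      show "length s = length (gen m m)" using len by simp
      fix i assume "i < length s"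
      hence i: "i < Suc m" using len by simp
      show "s!i = gen m m ! i"
      proof (cases i)
        case 0 thus ?thesis using i p True by (simp add: gen_nth gv_def)
      next
        case (Suc k) thus ?thesis using i vals[of k] pm by (auto simp: gen_nth gv_def)
      qed
    qed
    thus ?thesis using pm by auto
  next
    case False
    have pm1: "Suc p = m"
    proof (rule ccontr)
      assume "Suc p \<noteq> m"
      hence p2: "Suc (Suc p) < Suc m" using pm by auto
      have b12: "s!Suc p < s!Suc (Suc p)" using after p2 by auto
      have allx: "\<And>x. x < p \<Longrightarrow> s!Suc p < s!x"
      proof -
        fix x assume x: "x < p"
        have "s!Suc (Suc p) < s!p" using neqN[of "Suc (Suc p)"] p p2 by auto
        hence "\<not> s!x < s!Suc p" using av1423[OF a2, of x p "Suc p" "Suc (Suc p)"] x p2 len b12 by auto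
        moreover have "s!x \<noteq> s!Suc p" using inj[of x "Suc p"] x p2 by auto
        ultimately show "s!Suc p < s!x" by auto
      qed
      have inc: "\<And>x y. x < y \<Longrightarrow> y < p \<Longrightarrow> s!x < s!y"
      proof -
        fix x y assume xy: "x < y" "y < p"
        have "\<not> s!y < s!x" using av321[OF a1, of x y "Suc p"] xy p2 len allx[of y] by auto
        moreover have "s!x \<noteq> s!y" using inj[of x y] xy pm by auto
        ultimately show "s!x < s!y" by auto
      qed
      define c where "c = s!0"
      have c1: "s!Suc p < c" using allx[of 0] False c_def by auto
      have cpos: "1 \<le> s!Suc p" using hv[of "Suc p"] p2 by auto
      have cN: "c \<le> Suc m" using hv[of 0] c_def by auto
      have "c - 1 \<in> {1..Suc m}" using c1 cpos cN by auto
      then obtain j where j: "j < Suc m" "s!j = c - 1" using sj[of "c-1"] by blast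
      have jp: "p < j"
      proof (rule ccontr)
        assume "\<not> p < j"
        hence "j < p \<or> j = p" by auto
        thus False
        proof
          assume jlt: "j < p"
          have "j \<noteq> 0"
          proof
            assume "j = 0" hence "c = c - 1" using j c_def by simp
            thus False using c1 by simp
          qed
          hence "c < s!j" using inc[of 0 j] jlt c_def by auto
          thus False using j by auto
        next
          assume "j = p" thus False using j p cN by auto
        qed
      qed
      have asc: "s!0 < s!Suc 0"
      proof (cases "p = 1")
        case True thus ?thesis using neqN[of 0] p False by auto
      next
        case False thus ?thesis using inc[of 0 1] \<open>p \<noteq> 0\<close> by auto
      qed
      have "s!0 \<noteq> s!j + 1" using fishD[OF fs, of 0 j] jp j len asc pm by auto
      thus False using j c_def c1 by auto
    qed
    define b where "b = s!m"
    have bm: "b \<le> m" using hv[of m] neqN[of m] pm unfolding b_def by auto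
    have b1: "1 \<le> b" using hv[of m] unfolding b_def by auto
    show ?thesis
    proof (cases "b = m")
      case True
      have mono: "\<And>i j. i<j \<Longrightarrow> j<p \<Longrightarrow> s!i < s!j"
      proof -
        fix x y assume xy: "x < y" "y < p"
        have "s!x < m" using neqN[of x] inj[of x m] xy pm True b_def by fastforce
        hence "\<not> s!y < s!x" using av2143[OF a3, of x y p m] xy pm len p True b_def by auto
        moreover have "s!x \<noteq> s!y" using inj[of x y] xy pm by auto
        ultimately show "s!x < s!y" by auto
      qed
      have img: "(\<lambda>i. s!i) ` {0..<p} = set [1..<m]"
      proof
        show "(\<lambda>i. s!i) ` {0..<p} \<subseteq> set [1..<m]"
        proof
          fix v assume "v \<in> (\<lambda>i. s!i) ` {0..<p}"
          then obtain i where i: "i < p" "v = s!i" by auto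
          have "s!i \<noteq> m" using inj[of i m] i pm True b_def by auto
          thus "v \<in> set [1..<m]" using neqN[of i] hv[of i] i pm by auto
        qed
        show "set [1..<m] \<subseteq> (\<lambda>i. s!i) ` {0..<p}"
        proof
          fix v assume v: "v \<in> set [1..<m]"
          then obtain i where i: "i < Suc m" "s!i = v" using sj[of v] by auto
          have "i \<noteq> m" "i \<noteq> p" using i v True b_def p by auto
          hence "i < p" using i pm1 by auto
          thus "v \<in> (\<lambda>i. s!i) ` {0..<p}" using i by auto
        qed
      qed
      have vals: "\<And>i. i < p \<Longrightarrow> s!i = [1..<m] ! i"
        using sorted_seg[of p "\<lambda>i. s!i", OF mono img sorted_wrt_upt] by blast
      have "s = gen m 1"
      proof (rule nth_equalityI)
        show "length s = length (gen m 1)" using len by simp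
        fix i assume "i < length s"
        hence i: "i < Suc m" using len by simp
        show "s!i = gen m 1 ! i"
        proof -
          have "i < p \<or> i = p \<or> i = m" using i pm1 by auto
          thus ?thesis using vals[of i] p pm1 True b_def i by (auto simp: gen_nth gv_def)
        qed
      qed
      thus ?thesis using pm by auto
    next
      case False
      hence bm': "b < m" using bm by auto
      obtain q where q: "q < Suc m" "s!q = Suc b" using sj[of "Suc b"] bm' by auto
      have qp: "q < p"
      proof -
        have "q \<noteq> p" using q p bm' by auto
        moreover have "q \<noteq> m" using q b_def by auto
        ultimately show ?thesis using q pm1 by auto
      qed
      have vb: "\<And>x. x < p \<Longrightarrow> s!x \<noteq> b"
      proof -
        fix x assume x: "x < p"
        show "s!x \<noteq> b"
        proof
          assume "s!x = b" hence "x = m" using inj[of x m] x pm b_def by auto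
          thus False using x pm by simp
        qed
      qed
      have F1: "\<And>x y. x<y \<Longrightarrow> y<p \<Longrightarrow> b < s!x \<Longrightarrow> b < s!y \<Longrightarrow> s!x < s!y"
      proof -
        fix x y assume xy: "x<y" "y<p" "b < s!x" "b < s!y"
        have "\<not> s!y < s!x" using av321[OF a1, of x y m] xy pm len b_def by auto
        moreover have "s!x \<noteq> s!y" using inj[of x y] xy pm by auto
        ultimately show "s!x < s!y" by auto
      qed
      have F2: "\<And>x y. x<y \<Longrightarrow> y<p \<Longrightarrow> s!x < b \<Longrightarrow> s!y < b \<Longrightarrow> s!x < s!y"
      proof -
        fix x y assume xy: "x<y" "y<p" "s!x < b" "s!y < b"
        have "\<not> s!y < s!x" using av2143[OF a3, of x y p m] xy pm len b_def p bm by auto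
        moreover have "s!x \<noteq> s!y" using inj[of x y] xy pm by auto
        ultimately show "s!x < s!y" by auto
      qed
      have F3: "Suc q < p \<and> s!Suc q < b"
      proof -
        have nf: "\<not> s!q < s!Suc q"
        proof
          assume "s!q < s!Suc q"
          hence "s!q \<noteq> s!m + 1" using fishD[OF fs, of q m] qp pm1 len by auto
          thus False using q b_def by auto
        qed
        have "Suc q \<noteq> p" using nf p q bm' by auto
        hence sq: "Suc q < p" using qp by auto
        have "s!Suc q \<noteq> Suc b" using inj[of q "Suc q"] q sq pm by auto
        moreover have "s!Suc q \<noteq> b" using vb sq by auto
        ultimately have "s!Suc q < b" using nf q by auto
        thus ?thesis using sq by auto
      qed
      have q0: "q = 0"
      proof (rule ccontr)
        assume "q \<noteq> 0"
        have "s!0 \<noteq> Suc b" using inj[of 0 q] q \<open>q \<noteq> 0\<close> by auto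
        moreover have "\<not> Suc b < s!0" using F1[of 0 q] \<open>q \<noteq> 0\<close> qp q by auto
        ultimately have "s!0 < b" using vb[of 0] qp by auto
        hence "s!0 < s!Suc q" using F2[of 0 "Suc q"] F3 by auto
        thus False using av1423[OF a2, of 0 q "Suc q" m] \<open>q \<noteq> 0\<close> F3 pm len q b_def by auto
      qed
      have b2: "2 \<le> b" using F3 hv[of 1] q0 pm by auto
      have nb1: "\<And>x. 0 < x \<Longrightarrow> x < p \<Longrightarrow> s!x \<noteq> Suc b"
      proof -
        fix x assume x: "0 < x" "x < p"
        show "s!x \<noteq> Suc b"
        proof
          assume "s!x = Suc b" hence "x = 0" using inj[of x 0] x pm q q0 by auto
          thus False using x by simp
        qed
      qed
      have mono: "\<And>x y. x<y \<Longrightarrow> y<p - 1 \<Longrightarrow> s!Suc x < s!Suc y"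
      proof -
        fix x0 y0 assume xy0: "x0<y0" "y0<p - 1"
        define x where "x = Suc x0"
        define y where "y = Suc y0"
        have xy: "0 < x" "x < y" "y < p" using xy0 x_def y_def by auto
        have cx: "s!x < b \<or> Suc b < s!x" using vb[of x] nb1[of x] xy by auto
        have cy: "s!y < b \<or> Suc b < s!y" using vb[of y] nb1[of y] xy by auto
        have "s!x < s!y"
        proof (cases "s!x < b")
          case True
          thus ?thesis using cy F2[of x y] xy by auto
        next
          case False
          hence gx: "Suc b < s!x" using cx by auto
          show ?thesis
          proof (cases "s!y < b")
            case True
            have x1: "1 < x" using gx F3 q0 xy by (cases "x = 1") auto
            have "s!1 < s!y" using F2[of 1 y] F3 q0 x1 xy True by auto
            thus ?thesis using av1423[OF a2, of 1 x y m] x1 xy pm len True gx b_def by auto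
          next
            case False thus ?thesis using cy gx F1[of x y] xy by auto
          qed
        qed
        thus "s!Suc x0 < s!Suc y0" using x_def y_def by simp
      qed
      have img: "(\<lambda>i. s!Suc i) ` {0..<p - 1} = set ([1..<b] @ [b+2..<Suc m])"
      proof
        show "(\<lambda>i. s!Suc i) ` {0..<p - 1} \<subseteq> set ([1..<b] @ [b+2..<Suc m])"
        proof
          fix v assume "v \<in> (\<lambda>i. s!Suc i) ` {0..<p - 1}"
          then obtain i where i: "i < p - 1" "v = s!Suc i" by auto
          have "s!Suc i \<noteq> b" "s!Suc i \<noteq> Suc b" using vb[of "Suc i"] nb1[of "Suc i"] i by auto
          moreover have "s!Suc i < Suc m" "1 \<le> s!Suc i" using neqN[of "Suc i"] hv[of "Suc i"] i pm1 by auto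
          ultimately show "v \<in> set ([1..<b] @ [b+2..<Suc m])" using i by auto
        qed
        show "set ([1..<b] @ [b+2..<Suc m]) \<subseteq> (\<lambda>i. s!Suc i) ` {0..<p - 1}"
        proof
          fix v assume v: "v \<in> set ([1..<b] @ [b+2..<Suc m])"
          hence "v \<in> {1..Suc m}" using bm by auto
          then obtain i where i: "i < Suc m" "s!i = v" using sj[of v] by blast
          have vr: "v \<noteq> b" "v \<noteq> Suc b" "v \<noteq> Suc m" using v bm' by auto
          have "i \<noteq> m" using i(2) vr(1) b_def by auto
          moreover have "i \<noteq> p" using i(2) vr(3) p by auto
          moreover have "i \<noteq> 0"
          proof assume "i = 0" thus False using i(2) vr(2) q q0 by simp qed
          ultimately obtain k where "i = Suc k" "k < p - 1" using i pm1 by (cases i) auto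
          thus "v \<in> (\<lambda>i. s!Suc i) ` {0..<p - 1}" using i by auto
        qed
      qed
      have srt: "sorted_wrt (<) ([1..<b] @ [b+2..<Suc m])"
        by (auto simp: sorted_wrt_append)
      have vals: "\<And>i. i < p - 1 \<Longrightarrow> s!Suc i = ([1..<b] @ [b+2..<Suc m]) ! i"
        using sorted_seg[of "p - 1" "\<lambda>i. s!Suc i", OF mono img srt] by simp
      have "s = gen m b"
      proof (rule nth_equalityI)
        show "length s = length (gen m b)" using len by simp
        fix i assume "i < length s"
        hence i: "i < Suc m" using len by simp
        show "s!i = gen m b ! i"
        proof -
          have "i = 0 \<or> (0 < i \<and> i < p) \<or> i = p \<or> i = m" using i pm1 by auto
          moreover
          { assume "0 < i \<and> i < p"
            then obtain k where k: "i = Suc k" "k < p - 1" by (cases i) auto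
            hence "s!i = ([1..<b] @ [b+2..<Suc m]) ! k" using vals by auto
            hence ?thesis using k b2 pm1 i by (auto simp: gen_nth gv_def nth_append) }
          ultimately show ?thesis using q q0 p pm1 b_def b2 bm' i by (auto simp: gen_nth gv_def)
        qed
      qed
      thus ?thesis using b1 bm by auto
    qed
  qed
qed



lemma F_snoc: assumes "s \<in> F_set m [[3,2,1], [1,4,2,3], [2,1,4,3]]"
  shows "s @ [Suc m] \<in> F_set (Suc m) [[3,2,1], [1,4,2,3], [2,1,4,3]]"
proof -
  have st: "set s = {1..m}" and ds: "distinct s" and fs: "fishburn s"
    and a1: "avoids s [3,2,1]" and a2: "avoids s [1,4,2,3]" and a3: "avoids s [2,1,4,3]"
    using assms unfolding F_set_def permutations_of_set_def by auto
  have lt: "\<forall>v\<in>set s. v < Suc m" using st by auto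
  have p: "s @ [Suc m] \<in> permutations_of_set {1..Suc m}"
    unfolding permutations_of_set_def using st ds by auto
  have f: "fishburn (s @ [Suc m])" using fish_snoc[OF fs lt] .
  have b1: "avoids (s @ [Suc m]) [3,2,1]"
    using a1 contains_snoc[OF _ lt, of "[3,2,1]" 0] unfolding avoids_def by auto
  have b2: "avoids (s @ [Suc m]) [1,4,2,3]"
    using a2 contains_snoc[OF _ lt, of "[1,4,2,3]" 1] unfolding avoids_def by auto
  have b3: "avoids (s @ [Suc m]) [2,1,4,3]"
    using a3 contains_snoc[OF _ lt, of "[2,1,4,3]" 2] unfolding avoids_def by auto
  show ?thesis unfolding F_set_def using p f b1 b2 b3 by auto
qed

lemma F_last: assumes "s \<in> F_set (Suc m) [[3,2,1], [1,4,2,3], [2,1,4,3]]" "last s = Suc m"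
  shows "s = butlast s @ [Suc m] \<and> butlast s \<in> F_set m [[3,2,1], [1,4,2,3], [2,1,4,3]]"
proof -
  have st: "set s = {1..Suc m}" and ds: "distinct s" and fs: "fishburn s"
    and a1: "avoids s [3,2,1]" and a2: "avoids s [1,4,2,3]" and a3: "avoids s [2,1,4,3]"
    using assms unfolding F_set_def permutations_of_set_def by auto
  have ne: "s \<noteq> []"
  proof
    assume "s = []"
    hence "{1..Suc m} = ({}::nat set)" using st by simp
    thus False by simp
  qed
  define t where "t = butlast s"
  have "butlast s @ [last s] = s" by (rule append_butlast_last_id[OF ne])
  hence eq: "s = t @ [Suc m]" unfolding t_def assms(2) by (rule sym)
  have "distinct (t @ [Suc m])" using ds unfolding eq .
  hence d2: "distinct t" "Suc m \<notin> set t" by auto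
  have "set (t @ [Suc m]) = {1..Suc m}" using st unfolding eq .
  hence "insert (Suc m) (set t) = {1..Suc m}" by simp
  hence "set t = {1..Suc m} - {Suc m}" using d2 by (metis Diff_insert_absorb)
  also have "{1..Suc m} - {Suc m} = {1..m}" by (auto simp: atLeastAtMostSuc_conv)
  finally have sb: "set t = {1..m}" .
  have "t \<in> permutations_of_set {1..m}"
    unfolding permutations_of_set_def using sb d2 by simp
  moreover have "fishburn t" using fs fish_prefix[of t "[Suc m]"] unfolding eq by blast
  moreover have "avoids t p" if "avoids s p" for p
    using that contains_prefix[of t p "[Suc m]"] unfolding eq avoids_def by blast
  ultimately have tF: "t \<in> F_set m [[3,2,1], [1,4,2,3], [2,1,4,3]]" using a1 a2 a3 unfolding F_set_def by simp
  show ?thesis using conjI[OF eq tF] unfolding t_def .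
qed

lemma gen_last: "1 \<le> b \<Longrightarrow> b \<le> m \<Longrightarrow> last (gen m b) \<noteq> Suc m"
proof -
  have "gen m b \<noteq> []" using gen_len[of m b] by (metis list.size(3) nat.distinct(1))
  hence "last (gen m b) = gv m b m" using last_conv_nth[of "gen m b"] gen_nth[of m m b] by simp
  moreover assume "1 \<le> b" "b \<le> m"
  ultimately show ?thesis by (simp add: gv_def)
qed

lemma gen_inj: "inj_on (gen m) {1..m}"
proof
  fix b b' assume b: "b \<in> {1..m}" "b' \<in> {1..m}" and e: "gen m b = gen m b'"
  have "gv m b 0 = gv m b' 0" "gv m b m = gv m b' m"
    using e gen_nth[of 0 m b] gen_nth[of 0 m b'] gen_nth[of m m b] gen_nth[of m m b'] by auto
  thus "b = b'" using b by (auto simp: gv_def split: if_splits)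
qed

lemma F_decomp: "F_set (Suc m) [[3,2,1], [1,4,2,3], [2,1,4,3]] =
   (\<lambda>s. s @ [Suc m]) ` F_set m [[3,2,1], [1,4,2,3], [2,1,4,3]] \<union> gen m ` {1..m}"
proof
  show "F_set (Suc m) [[3,2,1], [1,4,2,3], [2,1,4,3]] \<subseteq>
   (\<lambda>s. s @ [Suc m]) ` F_set m [[3,2,1], [1,4,2,3], [2,1,4,3]] \<union> gen m ` {1..m}"
  proof
    fix s assume s: "s \<in> F_set (Suc m) [[3,2,1], [1,4,2,3], [2,1,4,3]]"
    show "s \<in> (\<lambda>s. s @ [Suc m]) ` F_set m [[3,2,1], [1,4,2,3], [2,1,4,3]] \<union> gen m ` {1..m}"
    proof (cases "last s = Suc m")
      case True thus ?thesis using F_last[OF s True] by blast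
    next
      case False thus ?thesis using classify[OF s False] by blast
    qed
  qed
  show "(\<lambda>s. s @ [Suc m]) ` F_set m [[3,2,1], [1,4,2,3], [2,1,4,3]] \<union> gen m ` {1..m}
     \<subseteq> F_set (Suc m) [[3,2,1], [1,4,2,3], [2,1,4,3]]"
  proof (rule Un_least)
    show "(\<lambda>s. s @ [Suc m]) ` F_set m [[3,2,1], [1,4,2,3], [2,1,4,3]] \<subseteq> F_set (Suc m) [[3,2,1], [1,4,2,3], [2,1,4,3]]"
      using F_snoc by blast
    show "gen m ` {1..m} \<subseteq> F_set (Suc m) [[3,2,1], [1,4,2,3], [2,1,4,3]]"
    proof
      fix x assume "x \<in> gen m ` {1..m}"
      then obtain b where b: "1 \<le> b" "b \<le> m" "x = gen m b" by auto
      have "gen m b \<in> F_set (Suc m) [[3,2,1], [1,4,2,3], [2,1,4,3]]"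
        unfolding F_set_def using gen_perm[OF b(1,2)] gen_fish[OF b(1,2)] gen_321[OF b(1,2)]
          gen_1423[OF b(1,2)] gen_2143[OF b(1,2)] by simp
      thus "x \<in> F_set (Suc m) [[3,2,1], [1,4,2,3], [2,1,4,3]]" using b(3) by simp
    qed
  qed
qed

lemma F_fin: "finite (F_set m ps)"
  unfolding F_set_def by (rule finite_subset[OF _ finite_permutations_of_set[of "{1..m}"]]) auto

lemma F_card_Suc: "card (F_set (Suc m) [[3,2,1], [1,4,2,3], [2,1,4,3]]) =
   card (F_set m [[3,2,1], [1,4,2,3], [2,1,4,3]]) + m"
proof -
  have disj: "(\<lambda>s. s @ [Suc m]) ` F_set m [[3,2,1], [1,4,2,3], [2,1,4,3]] \<inter> gen m ` {1..m} = {}"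
  proof -
    have "\<forall>x \<in> (\<lambda>s. s @ [Suc m]) ` F_set m [[3,2,1], [1,4,2,3], [2,1,4,3]]. last x = Suc m" by auto
    moreover have "\<forall>x \<in> gen m ` {1..m}. last x \<noteq> Suc m" using gen_last by auto
    ultimately show ?thesis by blast
  qed
  have c1: "card ((\<lambda>s. s @ [Suc m]) ` F_set m [[3,2,1], [1,4,2,3], [2,1,4,3]]) = card (F_set m [[3,2,1], [1,4,2,3], [2,1,4,3]])"
    by (rule card_image) (auto simp: inj_on_def)
  have c2: "card (gen m ` {1..m}) = m" using card_image[OF gen_inj] by simp
  show ?thesis unfolding F_decomp
    by (subst card_Un_disjoint) (use disj c1 c2 F_fin in auto)
qed

lemma F_zero: "F_set 0 [[3,2,1], [1,4,2,3], [2,1,4,3]] = {[]}"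
proof -
  have "\<not> contains_pattern [] p" if "p \<noteq> []" for p
  proof
    assume "contains_pattern [] p"
    then obtain "is" where h: "length is = length p" "\<forall>a\<in>set is. a < length ([]::nat list)"
      unfolding contains_pattern_def by blast
    hence "is = []" by (cases "is") auto
    thus False using h(1) that by simp
  qed
  moreover have "fishburn []" unfolding fishburn_def by simp
  moreover have "permutations_of_set {1..0::nat} = {[]}" by simp
  ultimately show ?thesis unfolding F_set_def avoids_def by auto
qed

theorem mainTheorem9:
  fixes n :: nat
  shows "card (F_set n [[3,2,1], [1,4,2,3], [2,1,4,3]]) = (n choose 2) + 1"
proof (induction n)
  case 0 show ?case by (subst F_zero) simp
next
  case (Suc m)
  have "(Suc m choose 2) = (m choose 2) + m" unfolding numeral_2_eq_2 binomial_Suc_Suc by simp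
  thus ?case using Suc F_card_Suc by simp
qed


end
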